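(* Let $S$ be an $n$-vertex star. For any $s\ge1$, any straight-line drawing of $S$ with spanning ratio at most $s$ has edge-length ratio in $2^{\Omega(n/s^2)}$.
   Context: A star is a tree with one vertex adjacent to all others. A straight-line drawing maps vertices to distinct points and edges to straight-line segments. In a straight-line drawing $\Gamma$, $\pi_\Gamma(u,v)$ is the minimum total Euclidean length of a path between $u$ and $v$, $\|uv\|_\Gamma$ is their Euclidean distance, and the spanning ratio is $\max_{u\neq v}\pi_\Gamma(u,v)/\|uv\|_\Gamma$. The edge-length ratio is the ratio between the lengths of the longest and shortest edges. The $\Omega$ notation hides an absolute constant. *)

theory Defs
  imports "HOL-Analysis.Analysis"
begin

text \<open>A straight-line drawing is a map of the vertices to
points of the Euclidean plane (injective on the vertex set).\<close>

type_synonym point = "real ^ 2"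

text \<open>The n-vertex star: vertices 0..n-1, centre 0 adjacent to every other vertex.\<close>
definition star_edges :: "nat \<Rightarrow> nat set set" where
  "star_edges n = {{0, i} | i. 1 \<le> i \<and> i < n}"

definition is_path :: "'a set set \<Rightarrow> 'a list \<Rightarrow> bool" where
  "is_path E xs \<longleftrightarrow> xs \<noteq> [] \<and> distinct xs \<and>
     (\<forall>i. Suc i < length xs \<longrightarrow> {xs ! i, xs ! Suc i} \<in> E)"

definition path_length :: "('a \<Rightarrow> point) \<Rightarrow> 'a list \<Rightarrow> real" where
  "path_length p xs = (\<Sum>i<length xs - 1. norm (p (xs ! Suc i) - p (xs ! i)))"

definition graph_dist :: "'a set set \<Rightarrow> ('a \<Rightarrow> point) \<Rightarrow> 'a \<Rightarrow> 'a \<Rightarrow> real" where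
  "graph_dist E p u v =
     Inf {path_length p xs | xs. is_path E xs \<and> hd xs = u \<and> last xs = v}"

definition spanning_ratio :: "'a set \<Rightarrow> 'a set set \<Rightarrow> ('a \<Rightarrow> point) \<Rightarrow> real" where
  "spanning_ratio V E p =
     Sup {graph_dist E p u v / norm (p u - p v) | u v. u \<in> V \<and> v \<in> V \<and> u \<noteq> v}"

definition edge_lengths :: "'a set set \<Rightarrow> ('a \<Rightarrow> point) \<Rightarrow> real set" where
  "edge_lengths E p = {norm (p u - p v) | u v. {u, v} \<in> E \<and> u \<noteq> v}"

definition edge_length_ratio :: "'a set set \<Rightarrow> ('a \<Rightarrow> point) \<Rightarrow> real" where
  "edge_length_ratio E p = Max (edge_lengths E p) / Min (edge_lengths E p)"

end

theory Submission
  imports Defs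
begin

lemma star_edge_iff: "{a,b} \<in> star_edges n \<longleftrightarrow> (a = 0 \<and> 1 \<le> b \<and> b < n) \<or> (b = 0 \<and> 1 \<le> a \<and> a < n)"
  unfolding star_edges_def by (auto simp: doubleton_eq_iff)

lemma path_star:
  assumes "is_path (star_edges n) xs" "hd xs = u" "last xs = v" "u \<noteq> v" "u \<noteq> 0" "v \<noteq> 0"
  shows "xs = [u,0,v]"
proof -
  have E: "\<And>i. Suc i < length xs \<Longrightarrow> xs!i = 0 \<or> xs!Suc i = 0"
    and d: "distinct xs" and ne: "xs \<noteq> []"
    using assms(1) unfolding is_path_def by (auto simp: star_edge_iff)
  have h: "xs!0 = u" using assms(2) ne by (simp add: hd_conv_nth)
  have l: "xs!(length xs - 1) = v" using assms(3) ne by (simp add: last_conv_nth)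
  have len: "length xs \<ge> 1" using ne by (cases xs) auto
  consider "length xs = 1" | "length xs = 2" | "length xs = 3" | "length xs \<ge> 4" using len by linarith
  then show ?thesis
  proof cases
    case 1 then show ?thesis using h l assms(4) by simp
  next
    case 2 then show ?thesis using h l assms(4-6) E[of 0] by simp
  next
    case 3
    have "xs!1 = 0" using E[of 0] h 3 assms(5) by simp
    moreover obtain a b c where "xs = [a,b,c]" using 3
      by (auto simp: numeral_3_eq_3 length_Suc_conv)
    ultimately show ?thesis using h l by simp
  next
    case 4
    have a: "xs!1 = 0" using E[of 0] h 4 assms(5) by simp
    have "xs!2 = 0 \<or> xs!3 = 0" using E[of 2] 4 by (simp add: numeral_3_eq_3)
    moreover have "xs!1 \<noteq> xs!2" "xs!1 \<noteq> xs!3" using d 4 by (auto simp: nth_eq_iff_index_eq)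
    ultimately show ?thesis using a by auto
  qed
qed

lemma graph_dist_star:
  assumes "u \<noteq> v" "u \<in> {1..<n}" "v \<in> {1..<n}"
  shows "graph_dist (star_edges n) p u v = norm (p u - p 0) + norm (p v - p 0)"
proof -
  have P: "is_path (star_edges n) [u,0,v]"
    using assms unfolding is_path_def by (auto simp: star_edge_iff less_Suc_eq)
  have "{path_length p xs | xs. is_path (star_edges n) xs \<and> hd xs = u \<and> last xs = v}
        = {path_length p [u,0,v]}"
  proof (intro equalityI subsetI)
    fix x assume "x \<in> {path_length p xs | xs. is_path (star_edges n) xs \<and> hd xs = u \<and> last xs = v}"
    then obtain xs where "x = path_length p xs" "is_path (star_edges n) xs" "hd xs = u" "last xs = v"
      by blast
    moreover have "xs = [u,0,v]" using path_star[OF calculation(2-4)] assms by simp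
    ultimately show "x \<in> {path_length p [u,0,v]}" by simp
  next
    fix x assume "x \<in> {path_length p [u,0,v]}"
    then show "x \<in> {path_length p xs | xs. is_path (star_edges n) xs \<and> hd xs = u \<and> last xs = v}"
      using P by auto
  qed
  moreover have "path_length p [u,0,v] = norm (p u - p 0) + norm (p v - p 0)"
    by (simp add: path_length_def norm_minus_commute)
  ultimately show ?thesis unfolding graph_dist_def by simp
qed

lemma edge_lengths_star:
  "edge_lengths (star_edges n) p = (\<lambda>i. norm (p i - p 0)) ` {1..<n}"
  unfolding edge_lengths_def
proof (intro equalityI subsetI)
  fix x assume "x \<in> {norm (p u - p v) |u v. {u, v} \<in> star_edges n \<and> u \<noteq> v}"
  then obtain u v where "x = norm (p u - p v)" "{u, v} \<in> star_edges n" by blast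
  then show "x \<in> (\<lambda>i. norm (p i - p 0)) ` {1..<n}"
    by (auto simp: star_edge_iff norm_minus_commute)
next
  fix x assume "x \<in> (\<lambda>i. norm (p i - p 0)) ` {1..<n}"
  then obtain i where a: "i \<in> {1..<n}" "x = norm (p i - p 0)" by auto
  show "x \<in> {norm (p u - p v) |u v. {u, v} \<in> star_edges n \<and> u \<noteq> v}"
  proof -
    from a have "{i,0} \<in> star_edges n" "i \<noteq> 0" by (auto simp: star_edge_iff)
    then show ?thesis using a(2) by blast
  qed
qed

lemma floor_log2:
  assumes "(x::real) \<ge> 1"
  shows "2 ^ nat \<lfloor>log 2 x\<rfloor> \<le> x" "x < 2 ^ (nat \<lfloor>log 2 x\<rfloor> + 1)"
proof -
  have l0: "log 2 x \<ge> 0" using assms by simp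
  have e: "real (nat \<lfloor>log 2 x\<rfloor>) = of_int \<lfloor>log 2 x\<rfloor>" using l0 by simp
  have "(2::real) ^ nat \<lfloor>log 2 x\<rfloor> = 2 powr (of_int \<lfloor>log 2 x\<rfloor>)"
    by (metis e powr_realpow zero_less_numeral)
  also have "\<dots> \<le> 2 powr (log 2 x)" by (intro powr_mono) auto
  also have "\<dots> = x" using assms by simp
  finally show "2 ^ nat \<lfloor>log 2 x\<rfloor> \<le> x" .
  have "x = 2 powr (log 2 x)" using assms by simp
  also have "\<dots> < 2 powr (of_int \<lfloor>log 2 x\<rfloor> + 1)" by (intro powr_less_mono) linarith+
  also have "\<dots> = 2 ^ (nat \<lfloor>log 2 x\<rfloor> + 1)"
    by (metis e of_nat_Suc Suc_eq_plus1 add.commute powr_realpow zero_less_numeral)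
  finally show "x < 2 ^ (nat \<lfloor>log 2 x\<rfloor> + 1)" .
qed

lemma floor_close: "\<lfloor>a::real\<rfloor> = \<lfloor>b\<rfloor> \<Longrightarrow> \<bar>a - b\<bar> < 1"
  by linarith

lemma floor_box: "\<bar>x::real\<bar> < a \<Longrightarrow> - \<lceil>a\<rceil> \<le> \<lfloor>x\<rfloor> \<and> \<lfloor>x\<rfloor> \<le> \<lceil>a\<rceil>"
proof -
  assume h: "\<bar>x\<bar> < a"
  have f1: "real_of_int \<lfloor>x\<rfloor> \<le> x" "x < real_of_int \<lfloor>x\<rfloor> + 1" by linarith+
  have c1: "a \<le> real_of_int \<lceil>a\<rceil>" by (rule le_of_int_ceiling)
  have "real_of_int \<lfloor>x\<rfloor> < real_of_int (\<lceil>a\<rceil> + 1)" using f1 c1 h abs_less_iff[of x a] by (simp; linarith)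
  then have u: "\<lfloor>x\<rfloor> < \<lceil>a\<rceil> + 1" by (simp only: of_int_less_iff)
  have "real_of_int (- \<lceil>a\<rceil> - 1) < real_of_int \<lfloor>x\<rfloor>" using f1 c1 h abs_less_iff[of x a] by (simp; linarith)
  then have l: "- \<lceil>a\<rceil> - 1 < \<lfloor>x\<rfloor>" by (simp only: of_int_less_iff)
  show ?thesis using u l by linarith
qed

lemma norm2_le: "norm (x::real^2) \<le> \<bar>x$1\<bar> + \<bar>x$2\<bar>"
  using norm_le_l1_cart[of x] by (simp add: sum_2)

theorem corollary1:
  shows "\<exists>c::real>0. \<exists>K::real. \<forall>(n::nat) (s::real) (p::nat \<Rightarrow> point).
           n \<ge> 2 \<longrightarrow> s \<ge> 1 \<longrightarrow> inj_on p {..<n} \<longrightarrow> real n / s\<^sup>2 \<ge> K \<longrightarrow>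
           spanning_ratio {..<n} (star_edges n) p \<le> s \<longrightarrow>
           edge_length_ratio (star_edges n) p \<ge> 2 powr (c * real n / s\<^sup>2)"
proof (rule exI[of _ "1/196"], rule conjI, simp, rule exI[of _ 196], intro allI impI)
  fix n :: nat and s :: real and p :: "nat \<Rightarrow> point"
  assume n2: "n \<ge> 2" and s1: "s \<ge> 1" and inj: "inj_on p {..<n}" and K: "real n / s\<^sup>2 \<ge> 196"
    and sr: "spanning_ratio {..<n} (star_edges n) p \<le> s"
  define V where "V = {1..<n}"
  define r where "r i = norm (p i - p 0)" for i
  define m where "m = Min (r ` V)"
  define M where "M = Max (r ` V)"
  have fV: "finite V" and neV: "V \<noteq> {}" using n2 by (auto simp: V_def)
  have rpos: "r i > 0" if "i \<in> V" for i
  proof -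
    have "p i \<noteq> p 0" using inj that n2 unfolding V_def by (auto dest: inj_onD)
    then show ?thesis by (simp add: r_def)
  qed
  have mV: "m \<in> r ` V" unfolding m_def using fV neV by (intro Min_in) auto
  have mpos: "m > 0" using mV rpos by auto
  have mle: "m \<le> r i" if "i \<in> V" for i unfolding m_def using fV that by (intro Min_le) auto
  have leM: "r i \<le> M" if "i \<in> V" for i unfolding M_def using fV that by (intro Max_ge) auto
  have ratio: "edge_length_ratio (star_edges n) p = M / m"
    unfolding edge_length_ratio_def edge_lengths_star M_def m_def V_def r_def by simp
  have sep: "r u + r v \<le> s * norm (p u - p v)" if "u \<in> V" "v \<in> V" "u \<noteq> v" for u v
  proof -
    let ?A = "{graph_dist (star_edges n) p u v / norm (p u - p v) | u v. u \<in> {..<n} \<and> v \<in> {..<n} \<and> u \<noteq> v}"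
    have "?A \<subseteq> (\<lambda>(u,v). graph_dist (star_edges n) p u v / norm (p u - p v)) ` ({..<n} \<times> {..<n})"
      by auto
    then have "finite ?A" by (rule finite_subset) auto
    then have "bdd_above ?A" by (rule bdd_above_finite)
    moreover have "graph_dist (star_edges n) p u v / norm (p u - p v) \<in> ?A"
      using that unfolding V_def by auto
    ultimately have "graph_dist (star_edges n) p u v / norm (p u - p v) \<le> Sup ?A"
      by (intro cSup_upper)
    also have "\<dots> \<le> s" using sr unfolding spanning_ratio_def .
    finally have q: "graph_dist (star_edges n) p u v / norm (p u - p v) \<le> s" .
    have "p u \<noteq> p v" using inj that unfolding V_def by (auto dest: inj_onD)
    then have np: "norm (p u - p v) > 0" by simp
    have "graph_dist (star_edges n) p u v = r u + r v"
      using graph_dist_star[of u v n p] that unfolding V_def r_def by simp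
    then show ?thesis using q np by (simp add: pos_divide_le_eq)
  qed
  define L where "L = nat \<lfloor>log 2 (M / m)\<rfloor>"
  define k where "k i = nat \<lfloor>log 2 (r i / m)\<rfloor>" for i
  have r1: "r i / m \<ge> 1" if "i \<in> V" for i using mle[OF that] mpos by simp
  have k1: "2 ^ k i * m \<le> r i" if "i \<in> V" for i
    using floor_log2(1)[OF r1[OF that]] mpos unfolding k_def by (simp add: pos_le_divide_eq)
  have k2: "r i < 2 ^ (k i + 1) * m" if "i \<in> V" for i
    using floor_log2(2)[OF r1[OF that]] mpos unfolding k_def by (simp add: pos_divide_less_eq)
  have kL: "k i \<le> L" if "i \<in> V" for i
  proof -
    have "r i / m \<le> M / m" using leM[OF that] mpos by (simp add: divide_right_mono)
    then have "log 2 (r i / m) \<le> log 2 (M / m)" using r1[OF that] by simp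
    then show ?thesis unfolding k_def L_def by (intro nat_mono floor_mono)
  qed
  have M1: "M / m \<ge> 1" using r1 leM mpos neV
    by (metis all_not_in_conv divide_right_mono order_trans less_imp_le)
  have LM: "2 ^ L \<le> M / m" unfolding L_def by (rule floor_log2(1)[OF M1])
  define d where "d i = 2 ^ k i * m / s" for i
  have dpos: "d i > 0" for i using mpos s1 unfolding d_def by simp
  define g where "g i = (k i, \<lfloor>(p i - p 0) $ 1 / d i\<rfloor>, \<lfloor>(p i - p 0) $ 2 / d i\<rfloor>)" for i
  have inj_g: "inj_on g V"
  proof (rule inj_onI, rule ccontr)
    fix u v assume u: "u \<in> V" and v: "v \<in> V" and e: "g u = g v" and ne: "u \<noteq> v"
    have ke: "k u = k v" using e unfolding g_def by simp
    then have de: "d u = d v" unfolding d_def by simp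
    have c: "\<bar>(p u - p v) $ j\<bar> < d u" if "\<lfloor>(p u - p 0) $ j / d u\<rfloor> = \<lfloor>(p v - p 0) $ j / d u\<rfloor>" for j
    proof -
      have "\<bar>(p u - p 0) $ j / d u - (p v - p 0) $ j / d u\<bar> < 1" using floor_close[OF that] .
      then have "\<bar>((p u - p 0) $ j - (p v - p 0) $ j) / d u\<bar> < 1" by (simp add: diff_divide_distrib)
      then have "\<bar>(p u - p 0) $ j - (p v - p 0) $ j\<bar> < d u" using dpos[of u]
        by (simp add: abs_divide pos_divide_less_eq)
      then show ?thesis by simp
    qed
    have c1: "\<bar>(p u - p v) $ 1\<bar> < d u" using e de unfolding g_def by (intro c) simp
    have c2: "\<bar>(p u - p v) $ 2\<bar> < d u" using e de unfolding g_def by (intro c) simp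
    have "norm (p u - p v) < 2 * d u" using norm2_le[of "p u - p v"] c1 c2 by linarith
    then have "s * norm (p u - p v) < s * (2 * d u)" using s1 by simp
    also have "s * (2 * d u) = 2 * (2 ^ k u * m)" using s1 unfolding d_def by simp
    also have "\<dots> \<le> r u + r v" using k1[OF u] k1[OF v] ke by simp
    finally show False using sep[OF u v ne] by simp
  qed
  define N where "N = \<lceil>2 * s\<rceil>"
  have gbox: "g ` V \<subseteq> {0..L} \<times> {-N..N} \<times> {-N..N}"
  proof
    fix y assume "y \<in> g ` V"
    then obtain i where i: "i \<in> V" and y: "y = g i" by auto
    have comp: "\<lfloor>(p i - p 0) $ j / d i\<rfloor> \<in> {-N..N}" for j
    proof -
      have "\<bar>(p i - p 0) $ j\<bar> \<le> r i" unfolding r_def by (rule component_le_norm_cart)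
      also have "\<dots> < 2 ^ (k i + 1) * m" by (rule k2[OF i])
      also have "\<dots> = 2 * s * d i" using s1 unfolding d_def by simp
      finally have "\<bar>(p i - p 0) $ j / d i\<bar> < 2 * s" using dpos[of i]
        by (simp add: abs_divide pos_divide_less_eq mult.commute mult.left_commute)
      from floor_box[OF this] show ?thesis unfolding N_def by simp
    qed
    show "y \<in> {0..L} \<times> {-N..N} \<times> {-N..N}" using comp kL[OF i] unfolding y g_def by simp
  qed
  have "card V \<le> card ({0..L} \<times> {-N..N} \<times> {-N..N})"
    using card_inj_on_le[OF inj_g gbox] by simp
  then have "n - 1 \<le> (L + 1) * (nat (2 * N + 1) * nat (2 * N + 1))"
    unfolding V_def by (simp add: card_cartesian_product)
  then have "real (n - 1) \<le> real ((L + 1) * (nat (2 * N + 1) * nat (2 * N + 1)))"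
    by (rule of_nat_mono)
  moreover have N0: "N \<ge> 0" unfolding N_def using s1 by simp
  moreover have "real (nat (2 * N + 1)) = real_of_int (2 * N + 1)" using N0 by simp
  ultimately have cnt: "real n - 1 \<le> (real L + 1) * (real_of_int (2 * N + 1))^2"
    using n2 by (simp add: of_nat_diff power2_eq_square algebra_simps)
  have "real_of_int N < 2 * s + 1" unfolding N_def by linarith
  then have b7: "real_of_int (2 * N + 1) \<le> 7 * s" using s1 by simp
  have "(real_of_int (2 * N + 1))^2 \<le> (7 * s)^2"
    by (rule power_mono[OF b7]) (use N0 in simp)
  then have m1: "(real L + 1) * (real_of_int (2 * N + 1))^2 \<le> (real L + 1) * (49 * s^2)"
    by (intro mult_left_mono) (simp_all add: power_mult_distrib)
  from order_trans[OF cnt m1] have c2: "real n - 1 \<le> (real L + 1) * 49 * s^2"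
    by (simp only: mult.assoc)
  define t where "t = real n / s^2"
  have sp: "s^2 > 0" using s1 by simp
  have nt: "real n = t * s^2" unfolding t_def using sp by simp
  have "real n / 2 \<le> real n - 1" using n2 by simp
  with c2 have "t * s^2 / 2 \<le> ((real L + 1) * 49) * s^2" by (simp add: nt)
  then have "(t / 2) * s^2 \<le> ((real L + 1) * 49) * s^2" by simp
  then have "t / 2 \<le> (real L + 1) * 49" using sp by (rule mult_right_le_imp_le)
  then have "t / 2 \<le> 49 * real L + 49" by (simp add: algebra_simps)
  moreover have "t \<ge> 196" using K unfolding t_def .
  ultimately have tL: "t / 196 \<le> real L" by linarith
  have "2 powr (1/196 * real n / s\<^sup>2) = 2 powr (t / 196)" unfolding t_def by (simp add: mult.commute)
  also have "\<dots> \<le> 2 powr (real L)" using tL by (intro powr_mono) auto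
  also have "\<dots> = 2 ^ L" by (simp add: powr_realpow)
  also have "\<dots> \<le> M / m" by (rule LM)
  finally have fin: "edge_length_ratio (star_edges n) p \<ge> 2 powr (1/196 * real n / s\<^sup>2)"
    unfolding ratio .
  then show "edge_length_ratio (star_edges n) p \<ge> 2 powr (1/196 * real n / s\<^sup>2)" by simp
qed

end
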